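(* Let $\gamma\in[0,1]$ and $V_p^->0$ be constants, and let $V_p>0$, $c>0$. Define $$p(v,V_p,c)=(1-\gamma)\Big(\frac{V_p}{V_p^-}\Big)^2v+\gamma v^3-(v+c)^3,$$ and suppose that $p(\cdot,V_p,c)$ has two positive zeros $0<v_1<v_2$. Consider the autonomous system $$\dot v=(1-\gamma)\Big(\frac{V_p}{V_p^-}\Big)^2m^3-(1-\gamma m^3)v^2,\qquad \dot m=(1-m)v-cm .$$ If $a=(a_1,a_2)$ and $b=(b_1,b_2)$ satisfy $$v_1<a_1<v_2,\qquad \sqrt[3]{\frac{a_1^2}{(1-\gamma)(V_p/V_p^-)^2+\gamma a_1^2}}<a_2<\frac{a_1}{a_1+c},$$ and $$v_2<b_1,\qquad \frac{b_1}{b_1+c}<b_2<\sqrt[3]{\frac{b_1^2}{(1-\gamma)(V_p/V_p^-)^2+\gamma b_1^2}},$$ then the box $K_{a,b}=[a_1,b_1]\times[a_2,b_2]$ is forward invariant under the flow of this system.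
   Context: The positive equilibria of the system are the points $(v,m)$ with $v>0$, $p(v,V_p,c)=0$ and $m=v/(v+c)$. Here $v$ is the dimensionless wind speed, $m$ the moisture, $V_p$ the maximum potential velocity (with $V_p^-$ a fixed reference value), $c$ the dimensionless wind shear. *)

theory Defs
  imports "HOL-Analysis.Analysis"
begin

text \<open>The cubic p(v, V_p, c); Vpm stands for the fixed reference value V_p^-.\<close>
definition pcub :: "real \<Rightarrow> real \<Rightarrow> real \<Rightarrow> real \<Rightarrow> real \<Rightarrow> real" where
  "pcub \<gamma> Vpm v Vp c = (1 - \<gamma>) * (Vp / Vpm)^2 * v + \<gamma> * v^3 - (v + c)^3"

definition vfield :: "real \<Rightarrow> real \<Rightarrow> real \<Rightarrow> real \<Rightarrow> real \<times> real \<Rightarrow> real \<times> real" where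
  "vfield \<gamma> Vpm Vp c = (\<lambda>(v, m).
     ((1 - \<gamma>) * (Vp / Vpm)^2 * m^3 - (1 - \<gamma> * m^3) * v^2,
      (1 - m) * v - c * m))"

text \<open>Since the system is autonomous, the initial time is taken to be 0.\<close>
definition forward_invariant :: "(real \<times> real \<Rightarrow> real \<times> real) \<Rightarrow> (real \<times> real) set \<Rightarrow> bool" where
  "forward_invariant F K \<longleftrightarrow>
     (\<forall>(x :: real \<Rightarrow> real \<times> real) T. 0 \<le> T \<longrightarrow>
        (\<forall>t\<in>{0..T}. (x has_vector_derivative F (x t)) (at t within {0..T})) \<longrightarrow>
        x 0 \<in> K \<longrightarrow> (\<forall>t\<in>{0..T}. x t \<in> K))"

end

theory Submission
  imports Defs
begin

lemma fst_vd:
  assumes "(x has_vector_derivative D) F"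
  shows "((\<lambda>t. fst (x t)) has_real_derivative fst D) F"
proof -
  have "((\<lambda>t. fst (x t)) has_derivative (\<lambda>h. fst (h *\<^sub>R D))) F"
    using has_derivative_fst assms unfolding has_vector_derivative_def by blast
  moreover have "(\<lambda>h. fst (h *\<^sub>R D)) = (*) (fst D)" by (auto simp: fun_eq_iff)
  ultimately show ?thesis unfolding has_field_derivative_def by simp
qed

lemma snd_vd:
  assumes "(x has_vector_derivative D) F"
  shows "((\<lambda>t. snd (x t)) has_real_derivative snd D) F"
proof -
  have "((\<lambda>t. snd (x t)) has_derivative (\<lambda>h. snd (h *\<^sub>R D))) F"
    using has_derivative_snd assms unfolding has_vector_derivative_def by blast
  moreover have "(\<lambda>h. snd (h *\<^sub>R D)) = (*) (snd D)" by (auto simp: fun_eq_iff)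
  ultimately show ?thesis unfolding has_field_derivative_def by simp
qed

lemma lower_local:
  fixes g :: "real \<Rightarrow> real"
  assumes der: "(g has_real_derivative l) (at s within S)"
    and lo: "lo \<le> g s" and pos: "g s = lo \<Longrightarrow> l > 0"
  shows "\<exists>d>0. \<forall>h. 0 < h \<and> h < d \<and> s + h \<in> S \<longrightarrow> lo < g (s + h)"
proof (cases "g s = lo")
  case True
  then obtain d where "d > 0" "\<forall>h>0. s + h \<in> S \<longrightarrow> h < d \<longrightarrow> g s < g (s + h)"
    using has_real_derivative_pos_inc_right[OF der pos] by blast
  then show ?thesis using True by blast
next
  case False
  then have "lo < g s" using lo by simp
  moreover have "(g \<longlongrightarrow> g s) (at s within S)"
    using DERIV_continuous[OF der] by (simp add: continuous_within)
  ultimately have "eventually (\<lambda>t. lo < g t) (at s within S)"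
    using order_tendstoD(1) by blast
  then obtain d where d: "d > 0" "\<forall>t\<in>S. t \<noteq> s \<and> dist t s < d \<longrightarrow> lo < g t"
    unfolding eventually_at by blast
  show ?thesis
  proof (intro exI[of _ d] conjI allI impI)
    fix h assume "0 < h \<and> h < d \<and> s + h \<in> S"
    then show "lo < g (s + h)" using d(2)[rule_format, of "s+h"] by (simp add: dist_real_def)
  qed (use d in auto)
qed

lemma both_local:
  fixes g :: "real \<Rightarrow> real"
  assumes der: "(g has_real_derivative l) (at s within S)"
    and lo: "lo \<le> g s" and pos: "g s = lo \<Longrightarrow> l > 0"
    and hi: "g s \<le> hi" and neg: "g s = hi \<Longrightarrow> l < 0"
  shows "\<exists>d>0. \<forall>h. 0 < h \<and> h < d \<and> s + h \<in> S \<longrightarrow> g (s + h) \<in> {lo..hi}"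
proof -
  obtain d1 where d1: "d1 > 0" "\<forall>h. 0 < h \<and> h < d1 \<and> s + h \<in> S \<longrightarrow> lo < g (s + h)"
    using lower_local[OF der lo pos] by blast
  have der': "((\<lambda>t. - g t) has_real_derivative - l) (at s within S)"
    using der by (rule DERIV_minus)
  obtain d2 where d2: "d2 > 0" "\<forall>h. 0 < h \<and> h < d2 \<and> s + h \<in> S \<longrightarrow> - hi < - g (s + h)"
    using lower_local[OF der', of "-hi"] hi neg by force
  show ?thesis
    apply (rule exI[of _ "min d1 d2"])
    using d1 d2 by auto
qed

lemma box_invariant:
  fixes x :: "real \<Rightarrow> real \<times> real"
  assumes der: "\<forall>t\<in>{0..T}. (x has_vector_derivative F (x t)) (at t within {0..T})"
    and x0: "x 0 \<in> {a1..b1} \<times> {a2..b2}"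
    and f1: "\<And>m. m \<in> {a2..b2} \<Longrightarrow> fst (F (a1, m)) > 0"
    and f2: "\<And>m. m \<in> {a2..b2} \<Longrightarrow> fst (F (b1, m)) < 0"
    and f3: "\<And>v. v \<in> {a1..b1} \<Longrightarrow> snd (F (v, a2)) > 0"
    and f4: "\<And>v. v \<in> {a1..b1} \<Longrightarrow> snd (F (v, b2)) < 0"
    and t0: "t0 \<in> {0..T}"
  shows "x t0 \<in> {a1..b1} \<times> {a2..b2}"
proof (rule ccontr)
  define K where "K = {a1..b1} \<times> {a2..b2}"
  assume "x t0 \<notin> {a1..b1} \<times> {a2..b2}"
  then have nt0: "x t0 \<notin> K" by (simp add: K_def)
  define B where "B = {t\<in>{0..T}. x t \<notin> K}"
  define s where "s = Inf B"
  have t0B: "t0 \<in> B" using t0 nt0 B_def by simp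
  have bdd: "bdd_below B" unfolding B_def by (rule bdd_belowI[of _ 0]) auto
  have s_le: "s \<le> t0" unfolding s_def using cInf_lower[OF t0B bdd] .
  have s_ge: "0 \<le> s" unfolding s_def using t0B by (intro cInf_greatest) (auto simp: B_def)
  have before: "x u \<in> K" if "0 \<le> u" "u < s" for u
  proof (rule ccontr)
    assume "x u \<notin> K"
    then have "u \<in> B" using that s_le t0 by (simp add: B_def)
    then have "s \<le> u" unfolding s_def using cInf_lower[OF _ bdd] by blast
    then show False using that by simp
  qed
  have cont: "continuous_on {0..T} x"
    using der has_vector_derivative_continuous continuous_on_eq_continuous_within by blast
  have closedK: "closed K" unfolding K_def by (simp add: closed_Times)
  have xs: "x s \<in> K"
  proof (cases "s = 0")
    case True then show ?thesis using x0 K_def by simp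
  next
    case False
    then have sp: "0 < s" using s_ge by simp
    have cs: "continuous_on {0..s} x"
      by (rule continuous_on_subset[OF cont]) (use s_le t0 in auto)
    have cl: "closed ({0..s} \<inter> x -` K)"
      using continuous_closed_preimage[OF cs _ closedK] by simp
    have "{0..<s} \<subseteq> {0..s} \<inter> x -` K" using before by auto
    then have "closure {0..<s} \<subseteq> {0..s} \<inter> x -` K"
      using cl by (rule closure_minimal)
    then have "{0..s} \<subseteq> x -` K" using sp by simp
    moreover have "s \<in> {0..s}" using sp by simp
    ultimately show ?thesis by blast
  qed
  have sT: "s < t0" using s_le xs nt0 by (cases "s = t0") auto
  obtain v m where vm: "x s = (v, m)" by (cases "x s")
  have sin: "s \<in> {0..T}" using s_ge sT t0 by auto
  have dx: "(x has_vector_derivative F (x s)) (at s within {0..T})" using der sin by blast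
  have v: "v \<in> {a1..b1}" and m: "m \<in> {a2..b2}" using xs vm K_def by auto
  obtain d1 where d1: "d1 > 0" "\<forall>h. 0 < h \<and> h < d1 \<and> s + h \<in> {0..T} \<longrightarrow> fst (x (s + h)) \<in> {a1..b1}"
    using both_local[OF fst_vd[OF dx], of a1 b1] vm v m f1 f2 by force
  obtain d2 where d2: "d2 > 0" "\<forall>h. 0 < h \<and> h < d2 \<and> s + h \<in> {0..T} \<longrightarrow> snd (x (s + h)) \<in> {a2..b2}"
    using both_local[OF snd_vd[OF dx], of a2 b2] vm v m f3 f4 by force
  define y where "y = s + min (min d1 d2) (t0 - s)"
  have "s < y" using d1 d2 sT by (simp add: y_def)
  then obtain b where b: "b \<in> B" "b < y"
    using cInf_less_iff[of B y] t0B bdd s_def by blast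
  have "s \<le> b" unfolding s_def using cInf_lower[OF b(1) bdd] .
  moreover have "b \<noteq> s" using b xs B_def by auto
  ultimately have bs: "s < b" by simp
  define h where "h = b - s"
  have hb: "b = s + h" "0 < h" "h < d1" "h < d2" "s + h \<in> {0..T}"
    using bs b(2) y_def h_def s_ge t0 b(1) B_def by auto
  then have "x b \<in> K" using d1 d2 K_def by (simp add: mem_Times_iff)
  then show False using b(1) B_def by simp
qed

theorem proposition3p7:
  fixes \<gamma> Vpm Vp c v1 v2 a1 a2 b1 b2 :: real
  assumes "0 \<le> \<gamma>" "\<gamma> \<le> 1" "0 < Vpm" "0 < Vp" "0 < c"
    and "0 < v1" "v1 < v2"
    and "pcub \<gamma> Vpm v1 Vp c = 0" "pcub \<gamma> Vpm v2 Vp c = 0"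
    and "v1 < a1" "a1 < v2"
    and "root 3 (a1^2 / ((1 - \<gamma>) * (Vp / Vpm)^2 + \<gamma> * a1^2)) < a2"
    and "a2 < a1 / (a1 + c)"
    and "v2 < b1"
    and "b1 / (b1 + c) < b2"
    and "b2 < root 3 (b1^2 / ((1 - \<gamma>) * (Vp / Vpm)^2 + \<gamma> * b1^2))"
  shows "forward_invariant (vfield \<gamma> Vpm Vp c) ({a1..b1} \<times> {a2..b2})"
proof -
  define k where "k = (1 - \<gamma>) * (Vp / Vpm)^2"
  have k0: "0 \<le> k" unfolding k_def using assms(2) by simp
  have Qpos: "0 < k + \<gamma> * w^2" if "0 < w" for w
  proof (cases "\<gamma> = 1")
    case True then show ?thesis using that k0 by (simp add: add_nonneg_pos)
  next
    case False
    then have "0 < k" unfolding k_def using assms(2,3,4) by simp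
    then show ?thesis using assms(1) by (simp add: add_pos_nonneg)
  qed
  have a1p: "0 < a1" using assms(6,10) by simp
  have b1p: "0 < b1" using assms(6,7,14) by simp
  have ab: "a1 \<le> b1" using assms(11,14) by simp
  have a2p: "0 < a2"
  proof -
    have "0 \<le> a1^2 / (k + \<gamma> * a1^2)" using Qpos[OF a1p] by simp
    then have "0 \<le> root 3 (a1^2 / (k + \<gamma> * a1^2))" by (rule real_root_ge_zero)
    then show ?thesis using assms(12) unfolding k_def by linarith
  qed
  have cube_gt: "q < m^3" if "root 3 q < m" for q m :: real
  proof -
    have "root 3 (m^3) = m" by (simp add: odd_real_root_power_cancel)
    then have "root 3 q < root 3 (m^3)" using that by simp
    then show ?thesis by simp
  qed
  have cube_lt: "m^3 < q" if "m < root 3 q" for q m :: real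
  proof -
    have "root 3 (m^3) = m" by (simp add: odd_real_root_power_cancel)
    then have "root 3 (m^3) < root 3 q" using that by simp
    then show ?thesis by simp
  qed
  have F: "vfield \<gamma> Vpm Vp c (v, m) = (m^3 * (k + \<gamma> * v^2) - v^2, v - m * (v + c))" for v m
    unfolding vfield_def k_def by (simp add: algebra_simps)
  show ?thesis unfolding forward_invariant_def
  proof (intro allI impI ballI)
    fix x :: "real \<Rightarrow> real \<times> real" and T t
    assume T: "0 \<le> T" and der: "\<forall>t\<in>{0..T}. (x has_vector_derivative vfield \<gamma> Vpm Vp c (x t)) (at t within {0..T})"
      and x0: "x 0 \<in> {a1..b1} \<times> {a2..b2}" and t: "t \<in> {0..T}"
    show "x t \<in> {a1..b1} \<times> {a2..b2}"
    proof (rule box_invariant[OF der x0 _ _ _ _ t])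
      fix m assume m: "m \<in> {a2..b2}"
      have "a1^2 / (k + \<gamma> * a1^2) < m^3" using cube_gt assms(12) m k_def by force
      then have "a1^2 < m^3 * (k + \<gamma> * a1^2)" using Qpos[OF a1p] by (simp add: divide_less_eq)
      then show "0 < fst (vfield \<gamma> Vpm Vp c (a1, m))" using F by simp
    next
      fix m assume m: "m \<in> {a2..b2}"
      have "m^3 < b1^2 / (k + \<gamma> * b1^2)" using cube_lt assms(16) m k_def by force
      then have "m^3 * (k + \<gamma> * b1^2) < b1^2" using Qpos[OF b1p] by (simp add: less_divide_eq)
      then show "fst (vfield \<gamma> Vpm Vp c (b1, m)) < 0" using F by simp
    next
      fix v assume v: "v \<in> {a1..b1}"
      have "a2 * (a1 + c) < a1" using assms(13,5) a1p by (simp add: less_divide_eq)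
      moreover have "a2 < 1"
      proof -
        have "a1 / (a1 + c) < 1" using assms(5) a1p by (simp add: divide_less_eq)
        then show ?thesis using assms(13) by linarith
      qed
      moreover have "a2 * (v - a1) \<le> v - a1"
        using mult_right_mono[of a2 1 "v - a1"] \<open>a2 < 1\<close> v by simp
      ultimately have "a2 * (v + c) < v" by (simp add: algebra_simps)
      then show "0 < snd (vfield \<gamma> Vpm Vp c (v, a2))" using F by simp
    next
      fix v assume v: "v \<in> {a1..b1}"
      have vp: "0 < v" using v a1p by simp
      have "v < b2 * (v + c)"
      proof (cases "b2 \<le> 1")
        case True
        have "b1 < b2 * (b1 + c)" using assms(15,5) b1p by (simp add: divide_less_eq)
        moreover have "b2 * (b1 - v) \<le> b1 - v"
          using mult_right_mono[of b2 1 "b1 - v"] True v by simp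
        ultimately show ?thesis by (simp add: algebra_simps)
      next
        case False
        then have "1 * (v + c) \<le> b2 * (v + c)" using vp assms(5)
          by (intro mult_right_mono) auto
        then show ?thesis using assms(5) by simp
      qed
      then show "snd (vfield \<gamma> Vpm Vp c (v, b2)) < 0" using F by simp
    qed
  qed
qed

end
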